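(* Let $(A^\bullet,\int_A)$ and $(B^\bullet,\int_B)$ be Poincaré duality $\mathbb R$-algebras of dimensions $d_A\ge1$ and $d_B\ge1$, and let $\ell_A\in A^1$, $\ell_B\in B^1$. If $A^\bullet$ satisfies $\operatorname{HR}^{\le1}_{\ell_A}$ and $B^\bullet$ satisfies $\operatorname{HR}^{\le1}_{\ell_B}$, then $((A\otimes B)^\bullet,\int_{A\otimes B})$ satisfies $\operatorname{HR}^{\le1}_{\ell_A\otimes1+1\otimes\ell_B}$.
   Context: A graded finite commutative $\mathbb R$-algebra $A^\bullet=\bigoplus_{i=0}^dA^i$ is a Poincaré duality algebra of dimension $d$ with degree map $\int:A^d\xrightarrow{\sim}\mathbb R$ if $A^0=\mathbb R$ and $(\xi,\zeta)\mapsto\int\xi\zeta$ is a non-degenerate pairing $A^i\times A^{d-i}\to\mathbb R$ for all $i$. $(A\otimes B)^k=\bigoplus_{i+j=k}A^i\otimes B^j$, a Poincaré duality algebra of dimension $d_A+d_B$ with $\int_{A\otimes B}(a\otimes b)=\int_Aa\cdot\int_Bb$. For $\ell\in A^1$ and $0\le i\le\lfloor d/2\rfloor$: $Q^i_\ell(x,y)=\int xy\ell^{d-2i}$ on $A^i$; the primitive space is $P^i_\ell=\{x\in A^i: x\ell^{d-2i+1}=0\}$; $A^\bullet$ satisfies $\operatorname{HR}^i_\ell$ if $(-1)^iQ^i_\ell$ is positive definite on $P^i_\ell$; $\operatorname{HR}^{\le1}_\ell$ means $\operatorname{HR}^0_\ell$ and $\operatorname{HR}^1_\ell$. *)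

theory Defs
  imports Complex_Main
begin

text \<open>A graded finite commutative real algebra is modelled as a type 'a of class
  real_algebra_1 and comm_ring_1 (the whole type is the algebra), together with a
  family of graded pieces G :: nat => 'a set.\<close>

definition graded_fin_alg :: "(nat \<Rightarrow> 'a::{real_algebra_1,comm_ring_1} set) \<Rightarrow> nat \<Rightarrow> bool" where
  "graded_fin_alg G d \<longleftrightarrow>
     (\<exists>S. finite S \<and> span S = (UNIV :: 'a set)) \<and>
     (\<forall>i. subspace (G i)) \<and>
     (\<forall>i>d. G i = {0}) \<and>
     (\<forall>i j. \<forall>x\<in>G i. \<forall>y\<in>G j. x * y \<in> G (i + j)) \<and>
     (\<forall>x::'a. \<exists>!f. (\<forall>i. f i \<in> G i) \<and> (\<forall>i>d. f i = 0) \<and> x = (\<Sum>i\<le>d. f i))"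

definition pd_algebra ::
  "(nat \<Rightarrow> 'a::{real_algebra_1,comm_ring_1} set) \<Rightarrow> nat \<Rightarrow> ('a \<Rightarrow> real) \<Rightarrow> bool" where
  "pd_algebra G d I \<longleftrightarrow>
     graded_fin_alg G d \<and>
     G 0 = range of_real \<and>
     (\<forall>x\<in>G d. \<forall>y\<in>G d. I (x + y) = I x + I y) \<and>
     (\<forall>x\<in>G d. \<forall>c. I (c *\<^sub>R x) = c * I x) \<and>
     bij_betw I (G d) UNIV \<and>
     (\<forall>i\<le>d. \<forall>x\<in>G i. x \<noteq> 0 \<longrightarrow> (\<exists>y\<in>G (d - i). I (x * y) \<noteq> 0))"

definition HR_Q :: "('a::{real_algebra_1,comm_ring_1} \<Rightarrow> real) \<Rightarrow> nat \<Rightarrow> 'a \<Rightarrow> nat \<Rightarrow> 'a \<Rightarrow> 'a \<Rightarrow> real" where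
  "HR_Q I d l i x y = I (x * y * l ^ (d - 2 * i))"

definition primitive :: "(nat \<Rightarrow> 'a::{real_algebra_1,comm_ring_1} set) \<Rightarrow> nat \<Rightarrow> 'a \<Rightarrow> nat \<Rightarrow> 'a set" where
  "primitive G d l i = {x \<in> G i. x * l ^ (d - 2 * i + 1) = 0}"

definition HR :: "(nat \<Rightarrow> 'a::{real_algebra_1,comm_ring_1} set) \<Rightarrow> nat \<Rightarrow> ('a \<Rightarrow> real) \<Rightarrow> 'a \<Rightarrow> nat \<Rightarrow> bool" where
  "HR G d I l i \<longleftrightarrow> (i \<le> d div 2 \<longrightarrow>
     (\<forall>x\<in>primitive G d l i. x \<noteq> 0 \<longrightarrow> (-1) ^ i * HR_Q I d l i x x > 0))"

definition HR_le1 :: "(nat \<Rightarrow> 'a::{real_algebra_1,comm_ring_1} set) \<Rightarrow> nat \<Rightarrow> ('a \<Rightarrow> real) \<Rightarrow> 'a \<Rightarrow> bool" where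
  "HR_le1 G d I l \<longleftrightarrow> HR G d I l 0 \<and> HR G d I l 1"

text \<open>(C, GC, IC) together with t (written a \<otimes> b = t a b) is the tensor product of the
  Poincare duality algebras (A,GA,IA) and (B,GB,IB): t is bilinear, sends some basis
  product to a basis of C, is multiplicative, the grading of C is the tensor grading,
  and the degree map is the product of degree maps.\<close>

definition tensor_pd_algebra ::
  "(nat \<Rightarrow> 'a::{real_algebra_1,comm_ring_1} set) \<Rightarrow> nat \<Rightarrow> ('a \<Rightarrow> real) \<Rightarrow>
   (nat \<Rightarrow> 'b::{real_algebra_1,comm_ring_1} set) \<Rightarrow> nat \<Rightarrow> ('b \<Rightarrow> real) \<Rightarrow>
   ('a \<Rightarrow> 'b \<Rightarrow> 'c::{real_algebra_1,comm_ring_1}) \<Rightarrow>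
   (nat \<Rightarrow> 'c set) \<Rightarrow> ('c \<Rightarrow> real) \<Rightarrow> bool" where
  "tensor_pd_algebra GA dA IA GB dB IB t GC IC \<longleftrightarrow>
     (\<forall>a. linear (t a)) \<and> (\<forall>b. linear (\<lambda>a. t a b)) \<and>
     (\<exists>BA BB. independent BA \<and> span BA = (UNIV :: 'a set) \<and>
              independent BB \<and> span BB = (UNIV :: 'b set) \<and>
              inj_on (\<lambda>(a, b). t a b) (BA \<times> BB) \<and>
              independent ((\<lambda>(a, b). t a b) ` (BA \<times> BB)) \<and>
              span ((\<lambda>(a, b). t a b) ` (BA \<times> BB)) = (UNIV :: 'c set)) \<and>
     (\<forall>a a' b b'. t a b * t a' b' = t (a * a') (b * b')) \<and>
     t 1 1 = 1 \<and>
     (\<forall>k. GC k = span {t a b | a b i j. i + j = k \<and> a \<in> GA i \<and> b \<in> GB j}) \<and>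
     (\<forall>x\<in>GC (dA + dB). \<forall>y\<in>GC (dA + dB). IC (x + y) = IC x + IC y) \<and>
     (\<forall>x\<in>GC (dA + dB). \<forall>c. IC (c *\<^sub>R x) = c * IC x) \<and>
     (\<forall>a\<in>GA dA. \<forall>b\<in>GB dB. IC (t a b) = IA a * IB b)"

end

theory Submission
  imports Defs
begin


lemma pd_sub: "pd_algebra G d I \<Longrightarrow> subspace (G i)"
  unfolding pd_algebra_def graded_fin_alg_def by simp
lemma pd_mult: "pd_algebra G d I \<Longrightarrow> x \<in> G i \<Longrightarrow> y \<in> G j \<Longrightarrow> x * y \<in> G (i + j)"
  unfolding pd_algebra_def graded_fin_alg_def by simp
lemma pd_top: "pd_algebra G d I \<Longrightarrow> d < i \<Longrightarrow> x \<in> G i \<Longrightarrow> x = 0"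
  unfolding pd_algebra_def graded_fin_alg_def by simp
lemma pd_G0: "pd_algebra G d I \<Longrightarrow> G 0 = range of_real"
  unfolding pd_algebra_def by simp
lemma pd_one: "pd_algebra G d I \<Longrightarrow> 1 \<in> G 0"
  using pd_G0[of G d I] by (metis of_real_1 rangeI)
lemma pd_add: "pd_algebra G d I \<Longrightarrow> x \<in> G d \<Longrightarrow> y \<in> G d \<Longrightarrow> I (x + y) = I x + I y"
  unfolding pd_algebra_def by simp
lemma pd_scale: "pd_algebra G d I \<Longrightarrow> x \<in> G d \<Longrightarrow> I (c *\<^sub>R x) = c * I x"
  unfolding pd_algebra_def by simp
lemma pd_zero: "pd_algebra G d I \<Longrightarrow> I 0 = 0"
proof -
  assume a: "pd_algebra G d I"
  have "0 \<in> G d" using pd_sub[OF a] by (simp add: subspace_def)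
  then show ?thesis using pd_scale[OF a, of 0 0] by simp
qed
lemma pd_inj: "pd_algebra G d I \<Longrightarrow> x \<in> G d \<Longrightarrow> I x = 0 \<Longrightarrow> x = 0"
proof -
  assume a: "pd_algebra G d I" "x \<in> G d" "I x = 0"
  have "0 \<in> G d" using pd_sub[OF a(1)] by (simp add: subspace_def)
  moreover have "inj_on I (G d)" using a(1) unfolding pd_algebra_def bij_betw_def by blast
  ultimately show ?thesis using a pd_zero[OF a(1)] by (metis inj_onD)
qed
lemma pd_pow: "pd_algebra G d I \<Longrightarrow> l \<in> G 1 \<Longrightarrow> l ^ j \<in> G j"
proof (induction j)
  case 0 then show ?case using pd_one by simp
next
  case (Suc j) then show ?case using pd_mult[of G d I l 1 "l^j" j] by simp
qed
lemma pd_diff: "pd_algebra G d I \<Longrightarrow> x \<in> G i \<Longrightarrow> y \<in> G i \<Longrightarrow> x - y \<in> G i"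
  using pd_sub subspace_diff by blast
lemma pd_scaleG: "pd_algebra G d I \<Longrightarrow> x \<in> G i \<Longrightarrow> c *\<^sub>R x \<in> G i"
  using pd_sub subspace_scale by blast

lemma pd_alpha:
  assumes a: "pd_algebra G d I" and l: "l \<in> G 1" and hr: "HR_le1 G d I l"
  shows "I (l ^ d) > 0"
proof -
  have "(1::'a) * l ^ (d - 2 * 0 + 1) = 0"
    using pd_top[OF a, of "Suc d"] pd_pow[OF a l, of "Suc d"] by simp
  then have "1 \<in> primitive G d l 0" using pd_one[OF a] by (simp add: primitive_def)
  then show ?thesis using hr unfolding HR_le1_def HR_def HR_Q_def by auto
qed




lemma pd_revCS:
  assumes a: "pd_algebra G d I" and l: "l \<in> G 1" and hr: "HR_le1 G d I l"
    and d2: "2 \<le> d" and x: "x \<in> G 1"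
  shows "I (x * x * l ^ (d - 2)) * I (l ^ d) \<le> (I (x * l ^ (d - 1)))\<^sup>2"
proof -
  define \<alpha> where "\<alpha> = I (l ^ d)"
  define L where "L = I (x * l ^ (d - 1))"
  define c where "c = L / \<alpha>"
  have \<alpha>pos: "\<alpha> > 0" using pd_alpha[OF a l hr] \<alpha>_def by simp
  have ld: "l ^ d \<in> G d" using pd_pow[OF a l] .
  have xl: "x * l ^ (d - 1) \<in> G d" using pd_mult[OF a x pd_pow[OF a l, of "d-1"]] d2 by simp
  have xx: "x * x * l ^ (d - 2) \<in> G d"
  proof -
    have h: "1 + 1 + (d - 2) = d" using d2 by simp
    have "x * x * l ^ (d - 2) \<in> G (1 + 1 + (d - 2))"
      using pd_mult[OF a pd_mult[OF a x x] pd_pow[OF a l, of "d-2"]] .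
    then show ?thesis by (simp only: h)
  qed
  define x' where "x' = x - c *\<^sub>R l"
  have x'G: "x' \<in> G 1" unfolding x'_def using pd_diff[OF a x pd_scaleG[OF a l]] .
  have e1: "l * l ^ (d - 2) = l ^ (d - 1)" using d2
    by (metis Suc_diff_Suc Suc_1 diff_Suc_eq_diff_pred less_le_trans lessI power_Suc)
  have e2: "l * l ^ (d - 1) = l ^ d" using d2
    by (metis Suc_diff_1 less_le_trans pos2 power_Suc)
  have p1: "x' * l ^ (d - 2 * 1 + 1) = x * l ^ (d - 1) + (- c) *\<^sub>R l ^ d"
  proof -
    have "d - 2 * 1 + 1 = d - 1" using d2 by simp
    then show ?thesis unfolding x'_def scaleR_conv_of_real
      using e2 by (simp add: algebra_simps) (metis e2 mult.left_commute)
  qed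
  have "I (x' * l ^ (d - 2 * 1 + 1)) = I (x * l ^ (d - 1) + (- c) *\<^sub>R l ^ d)" by (simp only: p1)
  also have "\<dots> = I (x * l ^ (d - 1)) + I ((- c) *\<^sub>R l ^ d)" by (rule pd_add[OF a xl pd_scaleG[OF a ld]])
  also have "\<dots> = L + (-c) * \<alpha>" unfolding L_def \<alpha>_def by (simp only: pd_scale[OF a ld])
  also have "\<dots> = 0" using \<alpha>pos c_def by simp
  finally have "x' * l ^ (d - 2 * 1 + 1) = 0"
    using pd_inj[OF a] p1 pd_add[OF a] xl pd_scaleG[OF a ld]
    by (metis (no_types, lifting) a pd_sub subspace_add)
  then have prim: "x' \<in> primitive G d l 1" using x'G by (simp add: primitive_def)
  have d1: "1 \<le> d div 2" using d2 by simp
  have neg: "I (x' * x' * l ^ (d - 2)) \<le> 0"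
  proof (cases "x' = 0")
    case True then show ?thesis using pd_zero[OF a] by simp
  next
    case False
    then have "(-1) ^ 1 * HR_Q I d l 1 x' x' > 0"
      using hr prim d1 unfolding HR_le1_def HR_def by blast
    then show ?thesis unfolding HR_Q_def by simp
  qed
  have p2: "x' * x' * l ^ (d - 2) = x * x * l ^ (d - 2) + ((-2 * c) *\<^sub>R (x * l ^ (d - 1)) + (c^2) *\<^sub>R l ^ d)"
  proof -
    have r: "\<And>x s l m :: 'a. (x - s*l)*(x - s*l)*m = x*x*m + ((-2*s)*(x*(l*m)) + (s*s)*(l*(l*m)))"
      by (simp add: algebra_simps)
    show ?thesis unfolding x'_def scaleR_conv_of_real r e1 e2
      by (simp add: power2_eq_square)
  qed
  have yG: "(-2 * c) *\<^sub>R (x * l ^ (d - 1)) \<in> G d" using pd_scaleG[OF a xl] .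
  have zG: "(c^2) *\<^sub>R l ^ d \<in> G d" using pd_scaleG[OF a ld] .
  have yzG: "(-2 * c) *\<^sub>R (x * l ^ (d - 1)) + (c^2) *\<^sub>R l ^ d \<in> G d"
    using yG zG pd_sub[OF a] subspace_add by blast
  have q1: "I (x' * x' * l ^ (d - 2)) = I (x * x * l ^ (d - 2)) + I ((-2 * c) *\<^sub>R (x * l ^ (d - 1)) + (c^2) *\<^sub>R l ^ d)"
    unfolding p2 by (rule pd_add[OF a xx yzG])
  have q2: "I ((-2 * c) *\<^sub>R (x * l ^ (d - 1)) + (c^2) *\<^sub>R l ^ d) = I ((-2 * c) *\<^sub>R (x * l ^ (d - 1))) + I ((c^2) *\<^sub>R l ^ d)"
    by (rule pd_add[OF a yG zG])
  have q3: "I ((-2 * c) *\<^sub>R (x * l ^ (d - 1))) = (-2 * c) * L"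
    unfolding L_def by (rule pd_scale[OF a xl])
  have q4: "I ((c^2) *\<^sub>R l ^ d) = c^2 * \<alpha>"
    unfolding \<alpha>_def by (rule pd_scale[OF a ld])
  have q5: "(-2 * c) * L + c^2 * \<alpha> = - (L^2 / \<alpha>)"
    using \<alpha>pos unfolding c_def by (simp add: field_simps power2_eq_square)
  have "I (x' * x' * l ^ (d - 2)) = I (x * x * l ^ (d - 2)) - L^2 / \<alpha>"
    using q1 q2 q3 q4 q5 by simp
  then have "I (x * x * l ^ (d - 2)) \<le> L^2 / \<alpha>" using neg by simp
  then show ?thesis using \<alpha>pos \<alpha>_def L_def by (simp add: field_simps)
qed




lemma pd_strict:
  assumes a: "pd_algebra G d I" and l: "l \<in> G 1" and hr: "HR_le1 G d I l"
    and d1: "1 \<le> d" and x: "x \<in> G 1" and L0: "I (x * l ^ (d - 1)) = 0" and nz: "x \<noteq> 0"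
  shows "2 \<le> d \<and> I (x * x * l ^ (d - 2)) < 0"
proof -
  have d2: "2 \<le> d"
  proof (rule ccontr)
    assume "\<not> 2 \<le> d"
    then have "d = 1" using d1 by simp
    then show False using L0 pd_inj[OF a] x nz by simp
  qed
  have xl: "x * l ^ (d - 1) \<in> G d" using pd_mult[OF a x pd_pow[OF a l, of "d-1"]] d2 by simp
  have "x * l ^ (d - 2 * 1 + 1) = 0"
  proof -
    have "d - 2 * 1 + 1 = d - 1" using d2 by simp
    then show ?thesis using pd_inj[OF a xl L0] by simp
  qed
  then have prim: "x \<in> primitive G d l 1" using x by (simp add: primitive_def)
  have "1 \<le> d div 2" using d2 by simp
  then have "(-1) ^ 1 * HR_Q I d l 1 x x > 0"
      using hr prim nz unfolding HR_le1_def HR_def by blast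
  then show ?thesis using d2 unfolding HR_Q_def by simp
qed




locale tens =
  fixes GA :: "nat \<Rightarrow> 'a::{real_algebra_1,comm_ring_1} set" and IA :: "'a \<Rightarrow> real"
    and GB :: "nat \<Rightarrow> 'b::{real_algebra_1,comm_ring_1} set" and IB :: "'b \<Rightarrow> real"
    and t :: "'a \<Rightarrow> 'b \<Rightarrow> 'c::{real_algebra_1,comm_ring_1}"
    and GC :: "nat \<Rightarrow> 'c set" and IC :: "'c \<Rightarrow> real"
    and dA dB :: nat
  assumes pA: "pd_algebra GA dA IA" and pB: "pd_algebra GB dB IB"
    and T: "tensor_pd_algebra GA dA IA GB dB IB t GC IC"
begin

lemma tlinr: "linear (t a)" using T unfolding tensor_pd_algebra_def by blast
lemma tlinl: "linear (\<lambda>a. t a b)" using T unfolding tensor_pd_algebra_def by blast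
lemma t0l: "t 0 b = 0" using linear_0[OF tlinl] by simp
lemma t0r: "t a 0 = 0" using linear_0[OF tlinr] by simp
lemma taddl: "t (x + y) b = t x b + t y b" using linear_add[OF tlinl] by simp
lemma taddr: "t a (x + y) = t a x + t a y" using linear_add[OF tlinr] by simp
lemma tscl: "t (c *\<^sub>R x) b = c *\<^sub>R t x b" using linear_scale[OF tlinl] by simp
lemma tscr: "t a (c *\<^sub>R x) = c *\<^sub>R t a x" using linear_scale[OF tlinr] by simp
lemma tmult: "t a b * t a' b' = t (a * a') (b * b')" using T unfolding tensor_pd_algebra_def by blast
lemma tone: "t 1 1 = 1" using T unfolding tensor_pd_algebra_def by blast
lemma GCdef: "GC k = span {t a b | a b i j. i + j = k \<and> a \<in> GA i \<and> b \<in> GB j}"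
  using T unfolding tensor_pd_algebra_def by blast
lemma tin: "a \<in> GA i \<Longrightarrow> b \<in> GB j \<Longrightarrow> t a b \<in> GC (i + j)"
  unfolding GCdef by (rule span_base) blast
lemma ICadd: "x \<in> GC (dA + dB) \<Longrightarrow> y \<in> GC (dA + dB) \<Longrightarrow> IC (x + y) = IC x + IC y"
  using T unfolding tensor_pd_algebra_def by blast
lemma ICscale: "x \<in> GC (dA + dB) \<Longrightarrow> IC (c *\<^sub>R x) = c * IC x"
  using T unfolding tensor_pd_algebra_def by blast
lemma ICt: "a \<in> GA dA \<Longrightarrow> b \<in> GB dB \<Longrightarrow> IC (t a b) = IA a * IB b"
  using T unfolding tensor_pd_algebra_def by blast
lemma IC0: "IC 0 = 0"
  using ICscale[of 0 0] unfolding GCdef by (simp add: span_zero)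

lemma ICsum: "finite S \<Longrightarrow> (\<forall>j\<in>S. y j \<in> GC (dA + dB)) \<Longrightarrow>
   IC (\<Sum>j\<in>S. c j *\<^sub>R y j) = (\<Sum>j\<in>S. c j * IC (y j))"
proof (induction S rule: finite_induct)
  case empty then show ?case using IC0 by simp
next
  case (insert k S)
  have "(\<Sum>j\<in>S. c j *\<^sub>R y j) \<in> GC (dA + dB)"
    unfolding GCdef by (rule span_sum, rule span_scale) (use insert in \<open>auto simp: GCdef\<close>)
  moreover have "c k *\<^sub>R y k \<in> GC (dA + dB)"
    unfolding GCdef by (rule span_scale) (use insert in \<open>auto simp: GCdef\<close>)
  ultimately show ?case using insert ICadd ICscale by simp
qed

lemma collapse_pt:
  assumes d: "p + q + N = dA + dB" and j: "j \<le> N"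
    and f: "f \<in> GA (j + p)" and g: "g \<in> GB (N + q - j)"
  shows "IC (t f g) = (if j = dA - p \<and> p \<le> dA \<and> q \<le> dB then IA f * IB g else 0)"
proof (cases "j + p = dA")
  case True
  then have "N + q - j = dB" using d j by simp
  then show ?thesis using True ICt f g j d by auto
next
  case False
  show ?thesis
  proof (cases "j + p > dA")
    case True
    then have "f = 0" using pd_top[OF pA _ f] by simp
    then show ?thesis using False t0l IC0 by auto
  next
    case F2: False
    then have "N + q - j > dB" using d j False by simp
    then have "g = 0" using pd_top[OF pB _ g] by simp
    then show ?thesis using False t0r IC0 by auto
  qed
qed

lemma tin': "a \<in> GA i \<Longrightarrow> b \<in> GB j \<Longrightarrow> i + j = k \<Longrightarrow> t a b \<in> GC k"
  using tin by blast

lemma collapse: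
  assumes d: "p + q + N = dA + dB"
    and f: "\<forall>j\<le>N. f j \<in> GA (j + p)" and g: "\<forall>j\<le>N. g j \<in> GB (N + q - j)"
  shows "IC (\<Sum>j\<le>N. c j *\<^sub>R t (f j) (g j)) =
     (if p \<le> dA \<and> q \<le> dB then c (dA - p) * (IA (f (dA - p)) * IB (g (dA - p))) else 0)"
proof -
  have mem: "\<forall>j\<in>{..N}. t (f j) (g j) \<in> GC (dA + dB)"
  proof
    fix j assume "j \<in> {..N}"
    then have j: "j \<le> N" by simp
    show "t (f j) (g j) \<in> GC (dA + dB)"
      by (rule tin'[OF f[rule_format, OF j] g[rule_format, OF j]]) (use j d in simp)
  qed
  have "IC (\<Sum>j\<le>N. c j *\<^sub>R t (f j) (g j)) = (\<Sum>j\<le>N. c j * IC (t (f j) (g j)))"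
    by (rule ICsum[OF _ mem]) simp
  also have "\<dots> = (\<Sum>j\<le>N. if j = dA - p then
        (if p \<le> dA \<and> q \<le> dB then c j * (IA (f j) * IB (g j)) else 0) else 0)"
  proof (rule sum.cong[OF refl])
    fix j assume "j \<in> {..N}"
    then have j: "j \<le> N" by simp
    show "c j * IC (t (f j) (g j)) = (if j = dA - p then
        (if p \<le> dA \<and> q \<le> dB then c j * (IA (f j) * IB (g j)) else 0) else 0)"
      using collapse_pt[OF d j f[rule_format, OF j] g[rule_format, OF j]] by auto
  qed
  also have "\<dots> = (if dA - p \<in> {..N} then
        (if p \<le> dA \<and> q \<le> dB then c (dA - p) * (IA (f (dA - p)) * IB (g (dA - p))) else 0) else 0)"
    by simp
  also have "\<dots> = (if p \<le> dA \<and> q \<le> dB then c (dA - p) * (IA (f (dA - p)) * IB (g (dA - p))) else 0)"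
    using d by auto
  finally show ?thesis .
qed

end



lemma binom_F:
  fixes m n :: nat
  assumes m: "1 \<le> m" and n: "1 \<le> n"
  defines "F \<equiv> fact (m + n - 2) / (fact m * fact n) :: real"
  shows "real ((m + n - 2) choose (m - 1)) = F * real m * real n"
    and "2 \<le> m \<Longrightarrow> real ((m + n - 2) choose (m - 2)) = F * real m * (real m - 1)"
    and "2 \<le> n \<Longrightarrow> real ((m + n - 2) choose m) = F * real n * (real n - 1)"
    and "real ((m + n - 1) choose (m - 1)) = F * (real m + real n - 1) * real m"
    and "real ((m + n - 1) choose m) = F * (real m + real n - 1) * real n"
    and "F > 0"
proof -
  obtain m' where m': "m = Suc m'" using m by (cases m) auto
  obtain n' where n': "n = Suc n'" using n by (cases n) auto
  have fm: "fact m = (real m) * fact m'" "fact n = (real n) * fact n'"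
    using m' n' by (simp_all del: of_nat_Suc)
  have fS: "fact (m + n - 1) = (real m + real n - 1) * fact (m + n - 2)"
  proof -
    have "m + n - 1 = Suc (m + n - 2)" using m n by simp
    then show ?thesis using m n by (simp add: of_nat_diff)
  qed
  have pos: "fact m' > (0::real)" "fact n' > (0::real)" "real m > 0" "real n > 0" using m n by auto
  show "F > 0" unfolding F_def by simp
  show "real ((m + n - 2) choose (m - 1)) = F * real m * real n"
  proof -
    have "real ((m + n - 2) choose (m - 1)) = fact (m + n - 2) / (fact m' * fact n')"
      using m' n' by (simp add: binomial_fact del: fact_Suc)
    then show ?thesis unfolding F_def fm using pos by (simp add: field_simps del: fact_Suc)
  qed
  show "2 \<le> m \<Longrightarrow> real ((m + n - 2) choose (m - 2)) = F * real m * (real m - 1)"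
  proof -
    assume "2 \<le> m"
    then obtain k where k: "m' = Suc k" using m' by (cases m') auto
    have fk: "fact m = real m * (real m - 1) * fact k" using m' k by (simp del: of_nat_Suc)
    have hb: "real ((m + n - 2) choose (m - 2)) = fact (m + n - 2) / (fact k * fact n)"
      using m' k by (simp add: binomial_fact del: fact_Suc)
    moreover have "real m - 1 > 0" "fact k > (0::real)" using m' k by auto
    ultimately show ?thesis unfolding hb F_def fk using pos by (simp add: field_simps del: fact_Suc)
  qed
  show "2 \<le> n \<Longrightarrow> real ((m + n - 2) choose m) = F * real n * (real n - 1)"
  proof -
    assume "2 \<le> n"
    then obtain k where k: "n' = Suc k" using n' by (cases n') auto
    have fk: "fact n = real n * (real n - 1) * fact k" using n' k by (simp del: of_nat_Suc)
    have hb: "real ((m + n - 2) choose m) = fact (m + n - 2) / (fact m * fact k)"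
    proof -
      have "m + n - 2 - m = k" using n' k by simp
      then show ?thesis using n' k by (simp add: binomial_fact del: fact_Suc)
    qed
    moreover have "real n - 1 > 0" "fact k > (0::real)" using n' k by auto
    ultimately show ?thesis unfolding hb F_def fk using pos by (simp add: field_simps del: fact_Suc)
  qed
  show "real ((m + n - 1) choose (m - 1)) = F * (real m + real n - 1) * real m"
  proof -
    have hb: "real ((m + n - 1) choose (m - 1)) = fact (m + n - 1) / (fact m' * fact n)"
    proof -
      have "m + n - 1 - (m - 1) = n" using m' by simp
      then show ?thesis using m' by (simp add: binomial_fact del: fact_Suc)
    qed
    then show ?thesis unfolding hb F_def fS fm using pos by (simp add: field_simps del: fact_Suc)
  qed
  show "real ((m + n - 1) choose m) = F * (real m + real n - 1) * real n"
  proof -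
    have hb: "real ((m + n - 1) choose m) = fact (m + n - 1) / (fact m * fact n')"
    proof -
      have "m + n - 1 - m = n'" using n' by simp
      then show ?thesis using n' by (simp add: binomial_fact del: fact_Suc)
    qed
    then show ?thesis unfolding hb F_def fS fm using pos by (simp add: field_simps del: fact_Suc)
  qed
qed




lemma quad_ineq:
  fixes m n u v :: real
  assumes m: "m \<ge> 1" and n: "n \<ge> 1" and p: "m * u + n * v = 0"
  shows "n^2 * (m * (m - 1) * u^2 + 2 * m * n * (u * v) + n * (n - 1) * v^2) = - (m * n * (m + n) * u^2)"
proof -
  have v: "n * v = - (m * u)" using p by simp
  have "n^2 * (m * (m - 1) * u^2 + 2 * m * n * (u * v) + n * (n - 1) * v^2)
      = n^2 * m * (m - 1) * u^2 + 2 * m * n^2 * u * (n * v) + n * (n - 1) * (n * v)^2"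
    by (simp add: algebra_simps power2_eq_square)
  also have "\<dots> = - (m * n * (m + n) * u^2)" unfolding v by (simp add: algebra_simps power2_eq_square)
  finally show ?thesis .
qed

lemma final_ineq:
  fixes m n :: nat and \<alpha> \<beta> LA LB qA qB :: real
  assumes m: "1 \<le> m" and n: "1 \<le> n" and \<alpha>: "\<alpha> > 0" and \<beta>: "\<beta> > 0"
    and prim: "real ((m + n - 1) choose (m - 1)) * (LA * \<beta>) + real ((m + n - 1) choose m) * (\<alpha> * LB) = 0"
    and cA: "2 \<le> m \<Longrightarrow> qA * \<alpha> \<le> LA^2" and cB: "2 \<le> n \<Longrightarrow> qB * \<beta> \<le> LB^2"
    and strict: "LA = 0 \<Longrightarrow> LB = 0 \<Longrightarrow> (2 \<le> m \<and> qA < 0) \<or> (2 \<le> n \<and> qB < 0)"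
  shows "(if 2 \<le> m then real ((m + n - 2) choose (m - 2)) * (qA * \<beta>) else 0)
     + 2 * (real ((m + n - 2) choose (m - 1)) * (LA * LB))
     + (if 2 \<le> n then real ((m + n - 2) choose m) * (\<alpha> * qB) else 0) < 0"
proof -
  define F where "F = fact (m + n - 2) / (fact m * fact n :: real)"
  note B = binom_F[OF m n, folded F_def]
  define M where "M = real m"
  define N where "N = real n"
  have M1: "M \<ge> 1" and N1: "N \<ge> 1" using m n by (auto simp: M_def N_def)
  have K0: "(if 2 \<le> m then real ((m + n - 2) choose (m - 2)) * (qA * \<beta>) else 0) = F * (M * (M - 1) * qA * \<beta>)"
    using B(2) m unfolding M_def by (cases "2 \<le> m") auto
  have K2: "(if 2 \<le> n then real ((m + n - 2) choose m) * (\<alpha> * qB) else 0) = F * (N * (N - 1) * \<alpha> * qB)"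
    using B(3) n unfolding N_def by (cases "2 \<le> n") auto
  define u where "u = LA * \<beta>"
  define v where "v = \<alpha> * LB"
  have "F * (M + N - 1) * (M * u + N * v) = 0"
    using prim unfolding B(4) B(5) M_def N_def u_def v_def by (simp add: algebra_simps)
  moreover have "F * (M + N - 1) > 0" using B(6) M1 N1 by simp
  ultimately have p: "M * u + N * v = 0" by (metis mult_eq_0_iff less_irrefl)
  define E where "E = M * (M - 1) * qA * \<beta> + 2 * M * N * (LA * LB) + N * (N - 1) * \<alpha> * qB"
  have lhs: "(if 2 \<le> m then real ((m + n - 2) choose (m - 2)) * (qA * \<beta>) else 0)
     + 2 * (real ((m + n - 2) choose (m - 1)) * (LA * LB))
     + (if 2 \<le> n then real ((m + n - 2) choose m) * (\<alpha> * qB) else 0) = F * E"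
    unfolding K0 K2 E_def using B(1) unfolding M_def N_def by (simp add: algebra_simps)
  have bA: "M * (M - 1) * qA * \<beta> * (\<alpha> * \<beta>) \<le> M * (M - 1) * u^2"
  proof (cases "2 \<le> m")
    case True
    have "0 \<le> M * (M - 1) * \<beta>^2" using M1 by simp
    from mult_left_mono[OF cA[OF True] this] show ?thesis
      unfolding u_def by (simp add: algebra_simps power2_eq_square)
  next
    case False then have "M = 1" using m unfolding M_def by simp
    then show ?thesis by simp
  qed
  have bB: "N * (N - 1) * \<alpha> * qB * (\<alpha> * \<beta>) \<le> N * (N - 1) * v^2"
  proof (cases "2 \<le> n")
    case True
    have "0 \<le> N * (N - 1) * \<alpha>^2" using N1 by simp
    from mult_left_mono[OF cB[OF True] this] show ?thesis
      unfolding v_def by (simp add: algebra_simps power2_eq_square)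
  next
    case False then have "N = 1" using n unfolding N_def by simp
    then show ?thesis by simp
  qed
  have Eab: "E * (\<alpha> * \<beta>) \<le> M * (M - 1) * u^2 + 2 * M * N * (u * v) + N * (N - 1) * v^2"
    using bA bB unfolding E_def u_def v_def by (simp add: algebra_simps)
  have q: "N^2 * (M * (M - 1) * u^2 + 2 * M * N * (u * v) + N * (N - 1) * v^2) = - (M * N * (M + N) * u^2)"
    by (rule quad_ineq[OF M1 N1 p])
  have "E < 0"
  proof (cases "u = 0")
    case False
    then have "- (M * N * (M + N) * u^2) < 0" using M1 N1 by simp
    then have "M * (M - 1) * u^2 + 2 * M * N * (u * v) + N * (N - 1) * v^2 < 0"
      using q N1 by (metis mult_less_0_iff not_less zero_le_power2 power2_eq_square mult_nonneg_nonneg)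
    then have "E * (\<alpha> * \<beta>) < 0" using Eab by linarith
    then show ?thesis using \<alpha> \<beta> by (simp add: mult_less_0_iff)
  next
    case True
    then have LA0: "LA = 0" using \<beta> unfolding u_def by simp
    have "v = 0" using p True N1 by simp
    then have LB0: "LB = 0" using \<alpha> unfolding v_def by simp
    have t1: "M * (M - 1) * qA * \<beta> \<le> 0"
    proof (cases "2 \<le> m")
      case True
      have "qA \<le> 0" using cA[OF True] LA0 \<alpha> by (simp add: mult_le_0_iff)
      then show ?thesis using M1 \<beta> by (simp add: mult_le_0_iff)
    next
      case False then have "M = 1" using m unfolding M_def by simp
      then show ?thesis by simp
    qed
    have t2: "N * (N - 1) * \<alpha> * qB \<le> 0"
    proof (cases "2 \<le> n")
      case True
      have "qB \<le> 0" using cB[OF True] LB0 \<beta> by (simp add: mult_le_0_iff)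
      then show ?thesis using N1 \<alpha> by (simp add: mult_le_0_iff)
    next
      case False then have "N = 1" using n unfolding N_def by simp
      then show ?thesis by simp
    qed
    from strict[OF LA0 LB0] show ?thesis
    proof
      assume h: "2 \<le> m \<and> qA < 0"
      then have "M - 1 > 0" unfolding M_def by simp
      then have "M * (M - 1) * qA * \<beta> < 0" using h M1 \<beta> by (simp add: mult_less_0_iff)
      then show ?thesis using t2 LA0 LB0 unfolding E_def by simp
    next
      assume h: "2 \<le> n \<and> qB < 0"
      then have "N - 1 > 0" unfolding N_def by simp
      then have "N * (N - 1) * \<alpha> * qB < 0" using h N1 \<alpha> by (simp add: mult_less_0_iff)
      then show ?thesis using t1 LA0 LB0 unfolding E_def by simp
    qed
  qed
  then show ?thesis unfolding lhs using B(6) by (simp add: mult_pos_neg)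
qed




context tens begin

lemma tpowl: "(t a 1) ^ k = t (a ^ k) 1"
  by (induction k) (simp_all add: tone tmult)
lemma tpowr: "(t 1 b) ^ k = t 1 (b ^ k)"
  by (induction k) (simp_all add: tone tmult)

lemma lpow: "(t lA 1 + t 1 lB) ^ N = (\<Sum>j\<le>N. real (N choose j) *\<^sub>R t (lA ^ j) (lB ^ (N - j)))"
  unfolding binomial_ring
proof (rule sum.cong[OF refl])
  fix j
  show "of_nat (N choose j) * t lA 1 ^ j * t 1 lB ^ (N - j) = real (N choose j) *\<^sub>R t (lA ^ j) (lB ^ (N - j))"
    unfolding tpowl tpowr mult.assoc tmult scaleR_conv_of_real of_real_of_nat_eq by simp
qed

lemma tmul_sum: "t u v * (\<Sum>j\<le>N. c j *\<^sub>R t (f j) (g j)) = (\<Sum>j\<le>N. c j *\<^sub>R t (u * f j) (v * g j))"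
  unfolding sum_distrib_left by (simp add: tmult)

lemma sum_mem:
  assumes d: "p + q + N = dA + dB"
    and f: "\<forall>j\<le>N. f j \<in> GA (j + p)" and g: "\<forall>j\<le>N. g j \<in> GB (N + q - j)"
  shows "(\<Sum>j\<le>N. c j *\<^sub>R t (f j) (g j)) \<in> GC (dA + dB)"
  unfolding GCdef
proof (rule span_sum, rule span_scale)
  fix j assume "j \<in> {..N}"
  then have j: "j \<le> N" by simp
  have "t (f j) (g j) \<in> GC (dA + dB)"
    by (rule tin'[OF f[rule_format, OF j] g[rule_format, OF j]]) (use j d in simp)
  then show "t (f j) (g j) \<in> span {t a b |a b i j. i + j = dA + dB \<and> a \<in> GA i \<and> b \<in> GB j}"
    unfolding GCdef .
qed

lemma ofr: "of_real r = r *\<^sub>R (1::'z::real_algebra_1)"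
  by (simp add: scaleR_conv_of_real)

lemma GC0: "x \<in> GC 0 \<Longrightarrow> \<exists>r. x = r *\<^sub>R 1"
proof -
  assume x: "x \<in> GC 0"
  have sub: "subspace {x::'c. \<exists>r. x = r *\<^sub>R 1}"
    unfolding subspace_def
  proof (intro conjI ballI allI)
    show "0 \<in> {x::'c. \<exists>r. x = r *\<^sub>R 1}" by (auto intro: exI[of _ 0])
  next
    fix x y assume "x \<in> {x::'c. \<exists>r. x = r *\<^sub>R 1}" "y \<in> {x::'c. \<exists>r. x = r *\<^sub>R 1}"
    then show "x + y \<in> {x::'c. \<exists>r. x = r *\<^sub>R 1}" by (auto simp flip: scaleR_add_left)
  next
    fix c x assume "x \<in> {x::'c. \<exists>r. x = r *\<^sub>R 1}"
    then show "c *\<^sub>R x \<in> {x::'c. \<exists>r. x = r *\<^sub>R 1}" by auto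
  qed
  show ?thesis
  proof (rule span_induct[OF x[unfolded GCdef] sub])
    fix y assume "y \<in> {t a b |a b i j. i + j = 0 \<and> a \<in> GA i \<and> b \<in> GB j}"
    then obtain a b where y: "y = t a b" and a: "a \<in> GA 0" and b: "b \<in> GB 0" by auto
    obtain r where r: "a = r *\<^sub>R 1" using a pd_G0[OF pA] ofr by auto
    obtain s where s: "b = s *\<^sub>R 1" using b pd_G0[OF pB] ofr by auto
    show "\<exists>r. y = r *\<^sub>R 1" unfolding y r s tscl tscr tone by auto
  qed
qed

lemma GC1: "x \<in> GC 1 \<Longrightarrow> \<exists>a\<in>GA 1. \<exists>b\<in>GB 1. x = t a 1 + t 1 b"
proof -
  assume x: "x \<in> GC 1"
  have sub: "subspace {x. \<exists>a\<in>GA 1. \<exists>b\<in>GB 1. x = t a 1 + t 1 b}"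
    unfolding subspace_def
  proof (intro conjI ballI allI)
    have "(0::'a) \<in> GA 1" "(0::'b) \<in> GB 1" using pd_sub[OF pA] pd_sub[OF pB] subspace_0 by blast+
    moreover have "(0::'c) = t 0 1 + t 1 0" using t0l t0r by simp
    ultimately show "0 \<in> {x. \<exists>a\<in>GA 1. \<exists>b\<in>GB 1. x = t a 1 + t 1 b}" by blast
  next
    fix x y assume "x \<in> {x. \<exists>a\<in>GA 1. \<exists>b\<in>GB 1. x = t a 1 + t 1 b}" "y \<in> {x. \<exists>a\<in>GA 1. \<exists>b\<in>GB 1. x = t a 1 + t 1 b}"
    then obtain a b a' b' where "a \<in> GA 1" "b \<in> GB 1" "a' \<in> GA 1" "b' \<in> GB 1"
      and "x = t a 1 + t 1 b" "y = t a' 1 + t 1 b'" by blast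
    moreover have "t a 1 + t 1 b + (t a' 1 + t 1 b') = t (a + a') 1 + t 1 (b + b')"
      by (simp add: taddl taddr algebra_simps)
    moreover have "a + a' \<in> GA 1" using subspace_add[OF pd_sub[OF pA]] \<open>a \<in> GA 1\<close> \<open>a' \<in> GA 1\<close> by blast
    moreover have "b + b' \<in> GB 1" using subspace_add[OF pd_sub[OF pB]] \<open>b \<in> GB 1\<close> \<open>b' \<in> GB 1\<close> by blast
    ultimately show "x + y \<in> {x. \<exists>a\<in>GA 1. \<exists>b\<in>GB 1. x = t a 1 + t 1 b}"
      by blast
  next
    fix c x assume "x \<in> {x. \<exists>a\<in>GA 1. \<exists>b\<in>GB 1. x = t a 1 + t 1 b}"
    then obtain a b where "a \<in> GA 1" "b \<in> GB 1" and "x = t a 1 + t 1 b" by blast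
    moreover have "c *\<^sub>R (t a 1 + t 1 b) = t (c *\<^sub>R a) 1 + t 1 (c *\<^sub>R b)"
      by (simp add: tscl tscr scaleR_add_right)
    ultimately show "c *\<^sub>R x \<in> {x. \<exists>a\<in>GA 1. \<exists>b\<in>GB 1. x = t a 1 + t 1 b}"
      using pd_scaleG[OF pA] pd_scaleG[OF pB] by fastforce
  qed
  show ?thesis
  proof (rule span_induct[OF x[unfolded GCdef] sub])
    fix y assume "y \<in> {t a b |a b i j. i + j = 1 \<and> a \<in> GA i \<and> b \<in> GB j}"
    then obtain a b i j where y: "y = t a b" and ij: "i + j = 1" and a: "a \<in> GA i" and b: "b \<in> GB j" by auto
    have z1: "(0::'a) \<in> GA 1" using pd_sub[OF pA] subspace_0 by blast
    have z2: "(0::'b) \<in> GB 1" using pd_sub[OF pB] subspace_0 by blast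
    show "\<exists>a\<in>GA 1. \<exists>b\<in>GB 1. y = t a 1 + t 1 b"
    proof (cases "i = 0")
      case True
      then have j: "j = 1" using ij by simp
      obtain r where r: "a = r *\<^sub>R 1" using a True pd_G0[OF pA] ofr by auto
      have "y = t 0 1 + t 1 (r *\<^sub>R b)" unfolding y r tscl tscr t0l by simp
      then show ?thesis using z1 pd_scaleG[OF pB b] j by blast
    next
      case False
      then have i: "i = 1" and j: "j = 0" using ij by auto
      obtain r where r: "b = r *\<^sub>R 1" using b j pd_G0[OF pB] ofr by auto
      have "y = t (r *\<^sub>R a) 1 + t 1 0" unfolding y r tscl tscr t0r by simp
      then show ?thesis using z2 pd_scaleG[OF pA a] i by blast
    qed
  qed
qed

end



context tens begin

lemma mA: "lA \<in> GA 1 \<Longrightarrow> u \<in> GA p \<Longrightarrow> \<forall>j\<le>N. u * lA ^ j \<in> GA (j + p)"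
  using pd_mult[OF pA _ pd_pow[OF pA]] by (metis add.commute)
lemma mB: "lB \<in> GB 1 \<Longrightarrow> v \<in> GB q \<Longrightarrow> \<forall>j\<le>N. v * lB ^ (N - j) \<in> GB (N + q - j)"
proof (intro allI impI)
  fix j assume l: "lB \<in> GB 1" and v: "v \<in> GB q" and j: "j \<le> N"
  have "v * lB ^ (N - j) \<in> GB (q + (N - j))" using pd_mult[OF pB v pd_pow[OF pB l]] .
  moreover have "q + (N - j) = N + q - j" using j by simp
  ultimately show "v * lB ^ (N - j) \<in> GB (N + q - j)" by simp
qed

lemma ICadd2: "x \<in> GC (dA + dB) \<Longrightarrow> y \<in> GC (dA + dB) \<Longrightarrow> IC (x + y) = IC x + IC y"
  by (rule ICadd)

lemma IC4:
  assumes X: "X \<in> GC (dA + dB)" and Y: "Y \<in> GC (dA + dB)" and Z: "Z \<in> GC (dA + dB)"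
  shows "IC (X + (Y + Y) + Z) = IC X + (IC Y + IC Y) + IC Z"
proof -
  have sub: "subspace (GC (dA + dB))" unfolding GCdef by (rule subspace_span)
  have YY: "Y + Y \<in> GC (dA + dB)" using subspace_add[OF sub Y Y] .
  have XYY: "X + (Y + Y) \<in> GC (dA + dB)" using subspace_add[OF sub X YY] .
  show ?thesis by (simp only: ICadd[OF XYY Z] ICadd[OF X YY] ICadd[OF Y Y])
qed

lemma main:
  assumes lA: "lA \<in> GA 1" and lB: "lB \<in> GB 1" and m1: "1 \<le> dA" and n1: "1 \<le> dB"
    and hA: "HR_le1 GA dA IA lA" and hB: "HR_le1 GB dB IB lB"
  shows "HR_le1 GC (dA + dB) IC (t lA 1 + t 1 lB)"
proof -
  define l where "l = t lA 1 + t 1 lB"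
  define \<alpha> where "\<alpha> = IA (lA ^ dA)"
  define \<beta> where "\<beta> = IB (lB ^ dB)"
  have \<alpha>: "\<alpha> > 0" unfolding \<alpha>_def by (rule pd_alpha[OF pA lA hA])
  have \<beta>: "\<beta> > 0" unfolding \<beta>_def by (rule pd_alpha[OF pB lB hB])
  have one: "(1::'a) \<in> GA 0" "(1::'b) \<in> GB 0" using pd_one[OF pA] pd_one[OF pB] by auto
  have HR0: "HR GC (dA + dB) IC l 0"
    unfolding HR_def
  proof (intro impI ballI)
    fix x assume x: "x \<in> primitive GC (dA + dB) l 0" and nz: "x \<noteq> 0"
    obtain r where r: "x = r *\<^sub>R 1" using GC0 x by (auto simp: primitive_def)
    have r0: "r \<noteq> 0" using nz r by auto
    let ?c = "\<lambda>j. r^2 * real ((dA + dB) choose j)"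
    have "x * x * l ^ (dA + dB - 2 * 0) = (\<Sum>j\<le>dA + dB. ?c j *\<^sub>R t (1 * lA ^ j) (1 * lB ^ (dA + dB - j)))"
      unfolding l_def lpow r by (simp add: scaleR_sum_right power2_eq_square)
    also have "IC \<dots> = ?c dA * (IA (1 * lA ^ dA) * IB (1 * lB ^ (dA + dB - dA)))"
      using collapse[of 0 0 "dA + dB" "\<lambda>j. 1 * lA ^ j" "\<lambda>j. 1 * lB ^ (dA + dB - j)" ?c]
        mA[OF lA one(1), of "dA + dB"] mB[OF lB one(2), of "dA + dB"] by simp
    also have "\<dots> = ?c dA * (\<alpha> * \<beta>)" unfolding \<alpha>_def \<beta>_def by simp
    finally have "IC (x * x * l ^ (dA + dB - 2 * 0)) = ?c dA * (\<alpha> * \<beta>)" .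
    moreover have "?c dA > 0" using r0 by simp
    ultimately show "0 < (- 1) ^ 0 * HR_Q IC (dA + dB) l 0 x x"
      unfolding HR_Q_def using \<alpha> \<beta> by simp
  qed
  have HR1: "HR GC (dA + dB) IC l 1"
    unfolding HR_def
  proof (intro impI ballI)
    fix x assume x: "x \<in> primitive GC (dA + dB) l 1" and nz: "x \<noteq> 0"
    obtain a b where a: "a \<in> GA 1" and b: "b \<in> GB 1" and xab: "x = t a 1 + t 1 b"
    proof -
      have "x \<in> GC 1" using x unfolding primitive_def by blast
      then show ?thesis using GC1 that by blast
    qed
    have d2: "2 \<le> dA + dB" using m1 n1 by simp
    define LA where "LA = IA (a * lA ^ (dA - 1))"
    define LB where "LB = IB (b * lB ^ (dB - 1))"
    define qA where "qA = IA (a * a * lA ^ (dA - 2))"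
    define qB where "qB = IB (b * b * lB ^ (dB - 2))"
    define N1 where "N1 = dA + dB - 1"
    define N2 where "N2 = dA + dB - 2"
    let ?c1 = "\<lambda>j. real (N1 choose j)"
    let ?c2 = "\<lambda>j. real (N2 choose j)"
    have aa: "a * a \<in> GA 2" using pd_mult[OF pA a a] by (simp add: numeral_2_eq_2)
    have bb: "b * b \<in> GB 2" using pd_mult[OF pB b b] by (simp add: numeral_2_eq_2)
    have dN1: "1 + 0 + N1 = dA + dB" "0 + 1 + N1 = dA + dB" using d2 unfolding N1_def by auto
    have dN2: "2 + 0 + N2 = dA + dB" "1 + 1 + N2 = dA + dB" "0 + 2 + N2 = dA + dB"
      using d2 unfolding N2_def by auto
    have "x * l ^ (dA + dB - 2 * 1 + 1) = 0" using x by (simp add: primitive_def)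
    moreover have "dA + dB - 2 * 1 + 1 = N1" using d2 unfolding N1_def by simp
    ultimately have x0: "x * l ^ N1 = 0" by metis
    have xS: "x * l ^ N1 = (\<Sum>j\<le>N1. ?c1 j *\<^sub>R t (a * lA ^ j) (1 * lB ^ (N1 - j)))
        + (\<Sum>j\<le>N1. ?c1 j *\<^sub>R t (1 * lA ^ j) (b * lB ^ (N1 - j)))"
      unfolding xab l_def lpow distrib_right tmul_sum ..
    have "IC (x * l ^ N1) = IC (\<Sum>j\<le>N1. ?c1 j *\<^sub>R t (a * lA ^ j) (1 * lB ^ (N1 - j)))
        + IC (\<Sum>j\<le>N1. ?c1 j *\<^sub>R t (1 * lA ^ j) (b * lB ^ (N1 - j)))"
      unfolding xS
      by (rule ICadd[OF sum_mem[OF dN1(1) mA[OF lA a] mB[OF lB one(2)]]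
                        sum_mem[OF dN1(2) mA[OF lA one(1)] mB[OF lB b]]])
    also have "\<dots> = ?c1 (dA - 1) * (IA (a * lA ^ (dA - 1)) * IB (1 * lB ^ (N1 - (dA - 1))))
        + ?c1 (dA - 0) * (IA (1 * lA ^ (dA - 0)) * IB (b * lB ^ (N1 - (dA - 0))))"
      using collapse[OF dN1(1) mA[OF lA a] mB[OF lB one(2)], of ?c1]
            collapse[OF dN1(2) mA[OF lA one(1)] mB[OF lB b], of ?c1] m1 n1 by simp
    also have "\<dots> = real ((dA + dB - 1) choose (dA - 1)) * (LA * \<beta>) + real ((dA + dB - 1) choose dA) * (\<alpha> * LB)"
    proof -
      have "N1 - (dA - 1) = dB" "N1 - dA = dB - 1" using m1 n1 unfolding N1_def by auto
      then show ?thesis unfolding LA_def LB_def \<alpha>_def \<beta>_def N1_def by simp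
    qed
    finally have prim: "real ((dA + dB - 1) choose (dA - 1)) * (LA * \<beta>) + real ((dA + dB - 1) choose dA) * (\<alpha> * LB) = 0"
      using x0 IC0 by simp
    have xx: "x * x = t (a * a) 1 + (t a b + t a b) + t 1 (b * b)"
      unfolding xab by (simp add: algebra_simps tmult)
    have xxS: "x * x * l ^ N2 = (\<Sum>j\<le>N2. ?c2 j *\<^sub>R t (a * a * lA ^ j) (1 * lB ^ (N2 - j)))
        + ((\<Sum>j\<le>N2. ?c2 j *\<^sub>R t (a * lA ^ j) (b * lB ^ (N2 - j)))
        + (\<Sum>j\<le>N2. ?c2 j *\<^sub>R t (a * lA ^ j) (b * lB ^ (N2 - j))))
        + (\<Sum>j\<le>N2. ?c2 j *\<^sub>R t (1 * lA ^ j) (b * b * lB ^ (N2 - j)))"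
      unfolding xx l_def lpow distrib_right tmul_sum ..
    have M1: "(\<Sum>j\<le>N2. ?c2 j *\<^sub>R t (a * a * lA ^ j) (1 * lB ^ (N2 - j))) \<in> GC (dA + dB)"
      by (rule sum_mem[OF dN2(1) mA[OF lA aa] mB[OF lB one(2)]])
    have M2: "(\<Sum>j\<le>N2. ?c2 j *\<^sub>R t (a * lA ^ j) (b * lB ^ (N2 - j))) \<in> GC (dA + dB)"
      by (rule sum_mem[OF dN2(2) mA[OF lA a] mB[OF lB b]])
    have M3: "(\<Sum>j\<le>N2. ?c2 j *\<^sub>R t (1 * lA ^ j) (b * b * lB ^ (N2 - j))) \<in> GC (dA + dB)"
      by (rule sum_mem[OF dN2(3) mA[OF lA one(1)] mB[OF lB bb]])
    have sub: "subspace (GC (dA + dB))" unfolding GCdef by (rule subspace_span)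
    have "IC (x * x * l ^ N2) = IC (\<Sum>j\<le>N2. ?c2 j *\<^sub>R t (a * a * lA ^ j) (1 * lB ^ (N2 - j)))
        + (IC (\<Sum>j\<le>N2. ?c2 j *\<^sub>R t (a * lA ^ j) (b * lB ^ (N2 - j)))
        + IC (\<Sum>j\<le>N2. ?c2 j *\<^sub>R t (a * lA ^ j) (b * lB ^ (N2 - j))))
        + IC (\<Sum>j\<le>N2. ?c2 j *\<^sub>R t (1 * lA ^ j) (b * b * lB ^ (N2 - j)))"
      unfolding xxS by (rule IC4[OF M1 M2 M3])
    also have "\<dots> = (if 2 \<le> dA then ?c2 (dA - 2) * (IA (a * a * lA ^ (dA - 2)) * IB (1 * lB ^ (N2 - (dA - 2)))) else 0)
        + 2 * (?c2 (dA - 1) * (IA (a * lA ^ (dA - 1)) * IB (b * lB ^ (N2 - (dA - 1)))))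
        + (if 2 \<le> dB then ?c2 (dA - 0) * (IA (1 * lA ^ (dA - 0)) * IB (b * b * lB ^ (N2 - (dA - 0)))) else 0)"
      using collapse[OF dN2(1) mA[OF lA aa] mB[OF lB one(2)], of ?c2]
            collapse[OF dN2(2) mA[OF lA a] mB[OF lB b], of ?c2]
            collapse[OF dN2(3) mA[OF lA one(1)] mB[OF lB bb], of ?c2] m1 n1 by simp
    also have "\<dots> = (if 2 \<le> dA then real ((dA + dB - 2) choose (dA - 2)) * (qA * \<beta>) else 0)
        + 2 * (real ((dA + dB - 2) choose (dA - 1)) * (LA * LB))
        + (if 2 \<le> dB then real ((dA + dB - 2) choose dA) * (\<alpha> * qB) else 0)"
    proof -
      have e1: "2 \<le> dA \<Longrightarrow> N2 - (dA - 2) = dB" unfolding N2_def by auto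
      have e2: "N2 - (dA - 1) = dB - 1" unfolding N2_def using m1 by auto
      have e3: "N2 - dA = dB - 2" unfolding N2_def by auto
      show ?thesis unfolding qA_def qB_def LA_def LB_def \<alpha>_def \<beta>_def N2_def[symmetric]
        using e1 e2 e3 by simp
    qed
    also have "\<dots> < 0"
    proof (rule final_ineq[OF m1 n1 \<alpha> \<beta> prim])
      show "2 \<le> dA \<Longrightarrow> qA * \<alpha> \<le> LA^2"
        unfolding qA_def LA_def \<alpha>_def by (rule pd_revCS[OF pA lA hA _ a])
      show "2 \<le> dB \<Longrightarrow> qB * \<beta> \<le> LB^2"
        unfolding qB_def LB_def \<beta>_def by (rule pd_revCS[OF pB lB hB _ b])
      assume LA0: "LA = 0" and LB0: "LB = 0"
      have "a \<noteq> 0 \<or> b \<noteq> 0" using nz xab t0l t0r by auto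
      then show "(2 \<le> dA \<and> qA < 0) \<or> (2 \<le> dB \<and> qB < 0)"
      proof
        assume "a \<noteq> 0"
        then show ?thesis using pd_strict[OF pA lA hA m1 a LA0[unfolded LA_def]] qA_def by simp
      next
        assume "b \<noteq> 0"
        then show ?thesis using pd_strict[OF pB lB hB n1 b LB0[unfolded LB_def]] qB_def by simp
      qed
    qed
    finally have "IC (x * x * l ^ N2) < 0" .
    moreover have "dA + dB - 2 * 1 = N2" unfolding N2_def by simp
    ultimately show "0 < (- 1) ^ 1 * HR_Q IC (dA + dB) l 1 x x"
      unfolding HR_Q_def by simp
  qed
  show ?thesis using HR0 HR1 unfolding HR_le1_def l_def by simp
qed

end

theorem proposition6p5:
  fixes GA :: "nat \<Rightarrow> 'a::{real_algebra_1,comm_ring_1} set" and IA :: "'a \<Rightarrow> real"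
    and GB :: "nat \<Rightarrow> 'b::{real_algebra_1,comm_ring_1} set" and IB :: "'b \<Rightarrow> real"
    and t :: "'a \<Rightarrow> 'b \<Rightarrow> 'c::{real_algebra_1,comm_ring_1}"
    and GC :: "nat \<Rightarrow> 'c set" and IC :: "'c \<Rightarrow> real"
    and dA dB :: nat and lA :: 'a and lB :: 'b
  assumes "pd_algebra GA dA IA" and "pd_algebra GB dB IB"
    and "dA \<ge> 1" and "dB \<ge> 1"
    and "lA \<in> GA 1" and "lB \<in> GB 1"
    and "tensor_pd_algebra GA dA IA GB dB IB t GC IC"
    and "HR_le1 GA dA IA lA" and "HR_le1 GB dB IB lB"
  shows "HR_le1 GC (dA + dB) IC (t lA 1 + t 1 lB)"
proof -
  interpret tens GA IA GB IB t GC IC dA dB using assms(1,2,7) by unfold_locales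
  show ?thesis by (rule main[OF assms(5,6,3,4,8,9)])
qed

end
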